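(* Fix $\lambda_s>0,\lambda>0$, $\alpha\in[0,1]$ and constants $0<c_1\le c_2$. For each $n\ge3$ let $\tilde n(n)$ be an integer with $1\le\tilde n(n)\le n$ and $c_1n^\alpha\le\tilde n(n)\le c_2 n^\alpha$. Then there exist $C>0$ and $N$ such that for all $n\ge N$ and every choice of $\tilde n(n)$ distinct jammed links of the ring $R(n)$, the average age $\Delta^{\ell}$ of the jammed ring satisfies $$\Delta^\ell\ge\begin{cases}C\,n^{\alpha}, & \alpha\ge \tfrac12,\\ C\sqrt n, & \alpha<\tfrac12.\end{cases}$$
   Context: Version-age model. A gossip network on a finite node set $\mathcal N$ is specified by source rates $\lambda_{0j}>0$ ($j\in\mathcal N$) and gossip rates $\lambda_{ij}\ge 0$ for ordered pairs $i\neq j$ ($\lambda_{ij}$ is the rate at which node $i$ sends updates to node $j$); $\lambda_s>0$ is the source's update rate. For nonempty $S\subseteq\mathcal N$ let $N(S)=\{i\in\mathcal N\setminus S:\ \sum_{j\in S}\lambda_{ij}>0\}$, and define the version ages recursively by $$\Delta_S=\frac{\lambda_s+\sum_{i\in N(S)}\big(\sum_{j\in S}\lambda_{ij}\big)\Delta_{S\cup\{i\}}}{\sum_{j\in S}\lambda_{0j}+\sum_{i\in N(S)}\sum_{j\in S}\lambda_{ij}}$$ (well defined by downward induction on $|S|$); $\Delta_i=\Delta_{\{i\}}$. Ring $R(n)$: nodes $\{1,\dots,n\}$, $\lambda_{0j}=\lambda/n$, and for each of the $n$ ring links $\{i,i+1\}$ (indices mod $n$) $\lambda_{i,i+1}=\lambda_{i+1,i}=\lambda/2$;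 all other rates $0$. Jamming $\tilde n$ distinct ring links means setting both rates of each of these links to $0$ (the ring then splits into $\tilde n$ line segments). The average age of the jammed ring is $\Delta^\ell=\frac1n\sum_{i=1}^n\Delta_i$ computed in the jammed network. *)

theory Defs
  imports Complex_Main
begin

text \<open>Version age of a general gossip network with finite node set Nd, source
rates l0, gossip rates lg (lg i j = rate from i to j) and source rate ls.
The downward recursion on |S| is implemented with an explicit fuel argument.\<close>

definition nbrs :: "'a set \<Rightarrow> ('a \<Rightarrow> 'a \<Rightarrow> real) \<Rightarrow> 'a set \<Rightarrow> 'a set" where
  "nbrs Nd lg S = {i \<in> Nd - S. (\<Sum>j\<in>S. lg i j) > 0}"

fun vage :: "nat \<Rightarrow> 'a set \<Rightarrow> ('a \<Rightarrow> real) \<Rightarrow> ('a \<Rightarrow> 'a \<Rightarrow> real) \<Rightarrow> real \<Rightarrow> 'a set \<Rightarrow> real" where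
  "vage 0 Nd l0 lg ls S = 0"
| "vage (Suc k) Nd l0 lg ls S =
     (ls + (\<Sum>i\<in>nbrs Nd lg S. (\<Sum>j\<in>S. lg i j) * vage k Nd l0 lg ls (insert i S)))
     / ((\<Sum>j\<in>S. l0 j) + (\<Sum>i\<in>nbrs Nd lg S. \<Sum>j\<in>S. lg i j))"

definition version_age :: "'a set \<Rightarrow> ('a \<Rightarrow> real) \<Rightarrow> ('a \<Rightarrow> 'a \<Rightarrow> real) \<Rightarrow> real \<Rightarrow> 'a set \<Rightarrow> real" where
  "version_age Nd l0 lg ls S = vage (card Nd + 1 - card S) Nd l0 lg ls S"

text \<open>Ring R(n) on nodes {0..<n}; link k (k < n) joins k and (k+1) mod n.
J is the set of jammed link indices: both directions of a jammed link get rate 0.\<close>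

definition jammed_ring_rate :: "nat \<Rightarrow> real \<Rightarrow> nat set \<Rightarrow> nat \<Rightarrow> nat \<Rightarrow> real" where
  "jammed_ring_rate n lam J i j =
     (if i < n \<and> j < n \<and> i \<noteq> j \<and>
         ((j = (i + 1) mod n \<and> i \<notin> J) \<or> (i = (j + 1) mod n \<and> j \<notin> J))
      then lam / 2 else 0)"

definition jammed_ring_avg_age :: "nat \<Rightarrow> real \<Rightarrow> real \<Rightarrow> nat set \<Rightarrow> real" where
  "jammed_ring_avg_age n lam ls J =
     (1 / real n) * (\<Sum>i<n. version_age {..<n} (\<lambda>_. lam / real n) (jammed_ring_rate n lam J) ls {i})"

end

theory Submission
  imports Defs
begin


lemma vage_lb:
  fixes Nd :: "'a set" and P :: "'a set \<Rightarrow> bool" and f :: "'a set \<Rightarrow> real"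
  assumes fin: "finite Nd"
    and PS: "\<And>S. P S \<Longrightarrow> S \<subseteq> Nd \<and> S \<noteq> {}"
    and l0pos: "\<And>j. j \<in> Nd \<Longrightarrow> l0 j > 0"
    and lgnn: "\<And>i j. lg i j \<ge> 0"
    and Pcl: "\<And>S i. P S \<Longrightarrow> i \<in> nbrs Nd lg S \<Longrightarrow> P (insert i S)"
    and step: "\<And>S. P S \<Longrightarrow> f S * ((\<Sum>j\<in>S. l0 j) + (\<Sum>i\<in>nbrs Nd lg S. \<Sum>j\<in>S. lg i j))
                 \<le> ls + (\<Sum>i\<in>nbrs Nd lg S. (\<Sum>j\<in>S. lg i j) * f (insert i S))"
    and PS0: "P S0"
  shows "f S0 \<le> version_age Nd l0 lg ls S0"
proof -
  have "\<forall>S. P S \<longrightarrow> k = card Nd + 1 - card S \<longrightarrow> f S \<le> vage k Nd l0 lg ls S" for k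
  proof (induction k)
    case 0
    then show ?case using PS fin by (metis card_mono add_diff_cancel_left' diff_is_0_eq le_add2 le_trans Suc_eq_plus1 not_one_le_zero zero_less_diff Suc_diff_le)
  next
    case (Suc k)
    show ?case
    proof (intro allI impI)
      fix S assume P: "P S" and k: "Suc k = card Nd + 1 - card S"
      have SN: "S \<subseteq> Nd" "S \<noteq> {}" using PS[OF P] by auto
      have finS: "finite S" using SN fin finite_subset by blast
      define D where "D = (\<Sum>j\<in>S. l0 j) + (\<Sum>i\<in>nbrs Nd lg S. \<Sum>j\<in>S. lg i j)"
      have "(\<Sum>j\<in>S. l0 j) > 0" using SN finS l0pos by (intro sum_pos) auto
      moreover have "(\<Sum>i\<in>nbrs Nd lg S. \<Sum>j\<in>S. lg i j) \<ge> 0" using lgnn by (intro sum_nonneg) auto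
      ultimately have Dpos: "D > 0" unfolding D_def by linarith
      have IH: "f (insert i S) \<le> vage k Nd l0 lg ls (insert i S)" if i: "i \<in> nbrs Nd lg S" for i
      proof -
        have iS: "i \<notin> S" "i \<in> Nd" using i unfolding nbrs_def by auto
        have "card (insert i S) = card S + 1" using iS finS by simp
        moreover have "card S \<le> card Nd" using SN fin card_mono by blast
        ultimately have "k = card Nd + 1 - card (insert i S)" using k by simp
        then show ?thesis using Suc.IH Pcl[OF P i] by blast
      qed
      have "(\<Sum>i\<in>nbrs Nd lg S. (\<Sum>j\<in>S. lg i j) * f (insert i S))
            \<le> (\<Sum>i\<in>nbrs Nd lg S. (\<Sum>j\<in>S. lg i j) * vage k Nd l0 lg ls (insert i S))"
        using IH lgnn by (intro sum_mono mult_left_mono) (auto intro: sum_nonneg)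
      then have "f S * D \<le> ls + (\<Sum>i\<in>nbrs Nd lg S. (\<Sum>j\<in>S. lg i j) * vage k Nd l0 lg ls (insert i S))"
        using step[OF P] unfolding D_def by linarith
      then have "f S \<le> (ls + (\<Sum>i\<in>nbrs Nd lg S. (\<Sum>j\<in>S. lg i j) * vage k Nd l0 lg ls (insert i S))) / D"
        using Dpos by (simp add: pos_le_divide_eq)
      then show "f S \<le> vage (Suc k) Nd l0 lg ls S" unfolding D_def by simp
    qed
  qed
  then show ?thesis unfolding version_age_def using PS0 by blast
qed



definition ed :: "nat \<Rightarrow> nat set \<Rightarrow> nat \<Rightarrow> nat" where
  "ed n J i = (i + (LEAST d. (i + d) mod n \<in> J)) mod n"

lemma ed_ex:
  fixes n i j :: nat
  assumes "J \<subseteq> {..<n}" "j \<in> J" "i < n"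
  shows "(i + (j + n - i)) mod n \<in> J"
proof -
  have "i + (j + n - i) = j + n" using assms(3) by presburger
  moreover have "j < n" using assms by auto
  ultimately show ?thesis using assms by simp
qed

lemma ed_in:
  assumes "J \<subseteq> {..<n}" "J \<noteq> {}" "i < n"
  shows "ed n J i \<in> J"
proof -
  obtain j where "j \<in> J" using assms by auto
  then have "\<exists>d. (i + d) mod n \<in> J" using ed_ex assms by blast
  then show ?thesis unfolding ed_def by (rule LeastI_ex[where P="\<lambda>d. (i+d) mod n \<in> J"])
qed

lemma ed_J:
  assumes "J \<subseteq> {..<n}" "j \<in> J"
  shows "ed n J j = j"
proof -
  have "j < n" using assms by auto
  then have "(LEAST d. (j + d) mod n \<in> J) = 0" using assms by (intro Least_eq_0) simp
  then show ?thesis using \<open>j < n\<close> unfolding ed_def by simp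
qed

lemma ed_step:
  assumes "J \<subseteq> {..<n}" "J \<noteq> {}" "x < n" "x \<notin> J"
  shows "ed n J x = ed n J ((x + 1) mod n)"
proof -
  obtain j where j: "j \<in> J" using assms by auto
  have P: "\<And>d. (x + Suc d) mod n = ((x + 1) mod n + d) mod n"
    by (simp add: mod_add_left_eq)
  have ex: "(x + (j + n - x)) mod n \<in> J" using ed_ex assms j by blast
  have L0: "(LEAST d. (x + d) mod n \<in> J) = Suc (LEAST d. (x + Suc d) mod n \<in> J)"
    by (rule Least_Suc[where P="\<lambda>d. (x+d) mod n \<in> J", OF ex]) (use assms in simp)
  have L: "(LEAST d. (x + d) mod n \<in> J) = Suc (LEAST d. ((x + 1) mod n + d) mod n \<in> J)"
    using L0 by (simp only: P)
  have "ed n J x = (x + Suc (LEAST d. ((x + 1) mod n + d) mod n \<in> J)) mod n"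
    by (simp only: ed_def L)
  also have "\<dots> = ((x + 1) mod n + (LEAST d. ((x + 1) mod n + d) mod n \<in> J)) mod n" by (rule P)
  also have "\<dots> = ed n J ((x + 1) mod n)" by (simp only: ed_def)
  finally show ?thesis .
qed

lemma rate_ed:
  assumes "J \<subseteq> {..<n}" "J \<noteq> {}" "jammed_ring_rate n lam J i j > 0"
  shows "ed n J i = ed n J j"
proof -
  have c: "i < n \<and> j < n \<and> ((j = (i + 1) mod n \<and> i \<notin> J) \<or> (i = (j + 1) mod n \<and> j \<notin> J))"
    using assms(3) unfolding jammed_ring_rate_def by (auto split: if_splits)
  then show ?thesis
  proof (elim conjE disjE)
    assume "i < n" "j = (i + 1) mod n" "i \<notin> J"
    then show ?thesis using ed_step[OF assms(1,2), of i] by simp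
  next
    assume "j < n" "i = (j + 1) mod n" "j \<notin> J"
    then show ?thesis using ed_step[OF assms(1,2), of j] by simp
  qed
qed

lemma rate_nn: "lam > 0 \<Longrightarrow> jammed_ring_rate n lam J i j \<ge> 0"
  unfolding jammed_ring_rate_def by auto

lemma sum_pos_ex: "finite S \<Longrightarrow> (\<Sum>j\<in>S. g j) > (0::real) \<Longrightarrow> \<exists>j\<in>S. g j > 0"
  by (metis not_less sum_nonpos)

lemma seg_bound:
  assumes J: "J \<subseteq> {..<n}" "J \<noteq> {}" and lam: "lam > 0" and ls: "ls > 0"
  shows "ls / lam * real (card J) \<le> jammed_ring_avg_age n lam ls J"
proof -
  have n: "n > 0" using J by auto
  define K where "K i = {x \<in> {..<n}. ed n J x = ed n J i}" for i
  have lb: "ls * real n / (lam * real (card (K i))) \<le> version_age {..<n} (\<lambda>_. lam / real n) (jammed_ring_rate n lam J) ls {i}"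
    if i: "i < n" for i
  proof -
    have Kfin: "finite (K i)" unfolding K_def by auto
    have iK: "i \<in> K i" using i unfolding K_def by auto
    then have cK: "card (K i) > 0" using Kfin card_gt_0_iff by blast
    have A: "(\<Sum>j\<in>K i. lam / real n) = real (card (K i)) * lam / real n" by simp
    have "ls / (real (card (K i)) * lam / real n) \<le> version_age {..<n} (\<lambda>_. lam / real n) (jammed_ring_rate n lam J) ls {i}"
    proof (rule vage_lb[where P = "\<lambda>S. S \<subseteq> K i \<and> S \<noteq> {}"])
      show "finite {..<n}" by simp
      show "\<And>S. S \<subseteq> K i \<and> S \<noteq> {} \<Longrightarrow> S \<subseteq> {..<n} \<and> S \<noteq> {}" unfolding K_def by auto
      show "\<And>j. j \<in> {..<n} \<Longrightarrow> lam / real n > 0" using lam n by simp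
      show "\<And>a b. jammed_ring_rate n lam J a b \<ge> 0" using rate_nn lam by blast
      show "{i} \<subseteq> K i \<and> {i} \<noteq> {}" using iK by simp
      show "\<And>S a. S \<subseteq> K i \<and> S \<noteq> {} \<Longrightarrow> a \<in> nbrs {..<n} (jammed_ring_rate n lam J) S \<Longrightarrow>
            insert a S \<subseteq> K i \<and> insert a S \<noteq> {}"
      proof -
        fix S a assume S: "S \<subseteq> K i \<and> S \<noteq> {}" and a: "a \<in> nbrs {..<n} (jammed_ring_rate n lam J) S"
        have fS: "finite S" using S Kfin finite_subset by blast
        from a have an: "a < n" and "(\<Sum>j\<in>S. jammed_ring_rate n lam J a j) > 0" unfolding nbrs_def by auto
        then obtain j where "j \<in> S" "jammed_ring_rate n lam J a j > 0" using sum_pos_ex fS by blast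
        then have "ed n J a = ed n J i" using rate_ed[OF J] S unfolding K_def by auto
        then show "insert a S \<subseteq> K i \<and> insert a S \<noteq> {}" using S an unfolding K_def by auto
      qed
      show "\<And>S. S \<subseteq> K i \<and> S \<noteq> {} \<Longrightarrow>
         ls / (real (card (K i)) * lam / real n) *
         ((\<Sum>j\<in>S. lam / real n) + (\<Sum>a\<in>nbrs {..<n} (jammed_ring_rate n lam J) S. \<Sum>j\<in>S. jammed_ring_rate n lam J a j))
         \<le> ls + (\<Sum>a\<in>nbrs {..<n} (jammed_ring_rate n lam J) S.
                 (\<Sum>j\<in>S. jammed_ring_rate n lam J a j) * (ls / (real (card (K i)) * lam / real n)))"
      proof -
        fix S assume S: "S \<subseteq> K i \<and> S \<noteq> {}"
        define c where "c = ls / (real (card (K i)) * lam / real n)"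
        define W where "W = (\<Sum>a\<in>nbrs {..<n} (jammed_ring_rate n lam J) S. \<Sum>j\<in>S. jammed_ring_rate n lam J a j)"
        have "card S \<le> card (K i)" using S Kfin card_mono by blast
        then have "(\<Sum>j\<in>S. lam / real n) \<le> real (card (K i)) * lam / real n"
          using lam n by (simp add: divide_right_mono mult_right_mono)
        then have "c * (\<Sum>j\<in>S. lam / real n) \<le> ls" unfolding c_def using lam n ls cK
          by (simp add: divide_le_eq field_simps)
        moreover have "(\<Sum>a\<in>nbrs {..<n} (jammed_ring_rate n lam J) S.
                 (\<Sum>j\<in>S. jammed_ring_rate n lam J a j) * c) = W * c"
          unfolding W_def by (simp add: sum_distrib_right)
        ultimately show "c * ((\<Sum>j\<in>S. lam / real n) + W) \<le> ls + (\<Sum>a\<in>nbrs {..<n} (jammed_ring_rate n lam J) S.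
                 (\<Sum>j\<in>S. jammed_ring_rate n lam J a j) * c)"
          by (simp add: distrib_left mult.commute)
      qed
    qed
    then show ?thesis using n by (simp add: field_simps)
  qed
  have "(\<Sum>i<n. 1 / real (card (K i))) = (\<Sum>j\<in>J. \<Sum>i\<in>{x\<in>{..<n}. ed n J x = j}. 1 / real (card (K i)))"
    by (rule sum.group[symmetric]) (use ed_in[OF J] finite_subset[OF J(1)] in auto)
  also have "\<dots> = (\<Sum>j\<in>J. 1)"
  proof (rule sum.cong[OF refl])
    fix j assume j: "j \<in> J"
    have Kj: "K i = {x\<in>{..<n}. ed n J x = j}" if "i \<in> {x\<in>{..<n}. ed n J x = j}" for i
      using that unfolding K_def by auto
    have jm: "j \<in> {x\<in>{..<n}. ed n J x = j}" using j J ed_J[OF J(1) j] by auto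
    then have "card {x\<in>{..<n}. ed n J x = j} > 0" using card_gt_0_iff[of "{x\<in>{..<n}. ed n J x = j}"] by auto
    then have "(\<Sum>i\<in>{x\<in>{..<n}. ed n J x = j}. 1 / real (card (K i))) =
       (\<Sum>i\<in>{x\<in>{..<n}. ed n J x = j}. 1 / real (card {x\<in>{..<n}. ed n J x = j}))"
      using Kj by (intro sum.cong) auto
    also have "\<dots> = 1" using \<open>card {x\<in>{..<n}. ed n J x = j} > 0\<close> jm by auto
    finally show "(\<Sum>i\<in>{x\<in>{..<n}. ed n J x = j}. 1 / real (card (K i))) = 1" .
  qed
  also have "\<dots> = real (card J)" by simp
  finally have sumK: "(\<Sum>i<n. 1 / real (card (K i))) = real (card J)" .
  have "ls / lam * real (card J) = (\<Sum>i<n. ls / lam * (1 / real (card (K i))))"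
    by (simp only: sumK[symmetric] sum_distrib_left)
  also have "\<dots> = (\<Sum>i<n. (1 / real n) * (ls * real n / (lam * real (card (K i)))))"
    using n by (intro sum.cong refl) simp
  also have "\<dots> = (1 / real n) * (\<Sum>i<n. ls * real n / (lam * real (card (K i))))"
    by (simp only: sum_distrib_left)
  also have "\<dots> \<le> (1 / real n) * (\<Sum>i<n. version_age {..<n} (\<lambda>_. lam / real n) (jammed_ring_rate n lam J) ls {i})"
    using lb n by (intro mult_left_mono sum_mono) auto
  finally show ?thesis unfolding jammed_ring_avg_age_def .
qed



definition arc :: "nat \<Rightarrow> nat \<Rightarrow> nat \<Rightarrow> nat set" where
  "arc n s m = (\<lambda>k. (s + k) mod n) ` {..<m}"

lemma pred_mod:
  fixes n i a :: nat
  assumes "i < n" "a mod n = (i + 1) mod n"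
  shows "i = (a + n - 1) mod n"
proof -
  have "i = (i + 1 + (n - 1)) mod n" using assms(1) by simp
  also have "\<dots> = ((i + 1) mod n + (n - 1)) mod n" by (simp add: mod_add_left_eq)
  also have "\<dots> = (a mod n + (n - 1)) mod n" using assms(2) by simp
  also have "\<dots> = (a + (n - 1)) mod n" by (simp add: mod_add_left_eq)
  also have "a + (n - 1) = a + n - 1" using assms(1) by simp
  finally show ?thesis .
qed

lemma arc_full:
  assumes "s < n" shows "arc n s n = {..<n}"
proof
  show "arc n s n \<subseteq> {..<n}" unfolding arc_def using assms by auto
  show "{..<n} \<subseteq> arc n s n"
  proof
    fix x assume x: "x \<in> {..<n}"
    define k where "k = (x + n - s) mod n"
    have "k < n" unfolding k_def using assms by simp
    moreover have "(s + k) mod n = (s + (x + n - s)) mod n" unfolding k_def by (simp add: mod_add_right_eq)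
    moreover have "s + (x + n - s) = x + n" using assms by simp
    ultimately show "x \<in> arc n s n" unfolding arc_def using x by (auto intro!: image_eqI[where x=k])
  qed
qed

lemma arc_ins1: "insert ((s + m) mod n) (arc n s m) = arc n s (Suc m)"
  unfolding arc_def by (simp add: lessThan_Suc)

lemma arc_ins2:
  assumes "s < n"
  shows "insert ((s + n - 1) mod n) (arc n s m) = arc n ((s + n - 1) mod n) (Suc m)"
proof -
  have "((s + n - 1) mod n + Suc k) mod n = (s + k) mod n" for k
  proof -
    have "((s + n - 1) mod n + Suc k) mod n = (s + n - 1 + Suc k) mod n" by (rule mod_add_left_eq)
    also have "s + n - 1 + Suc k = (s + k) + n" using assms by simp
    finally show ?thesis by simp
  qed
  then have "arc n ((s + n - 1) mod n) (Suc m) = insert ((s + n - 1) mod n) (arc n s m)"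
    unfolding arc_def lessThan_Suc_eq_insert_0 image_insert image_image using assms by simp
  then show ?thesis by simp
qed

lemma rate_pos_cases:
  assumes "jammed_ring_rate n lam J i j > 0"
  shows "i < n \<and> j < n \<and> (j = (i + 1) mod n \<or> i = (j + 1) mod n)"
  using assms unfolding jammed_ring_rate_def by (auto split: if_splits)

lemma arc_nbrs:
  assumes s: "s < n" and m: "m \<le> n" and i: "i \<in> nbrs {..<n} (jammed_ring_rate n lam J) (arc n s m)"
  shows "m < n \<and> (i = (s + m) mod n \<or> i = (s + n - 1) mod n)"
proof -
  have iS: "i < n" "i \<notin> arc n s m" and pos: "(\<Sum>j\<in>arc n s m. jammed_ring_rate n lam J i j) > 0"
    using i unfolding nbrs_def by auto
  have "m \<noteq> n" using iS arc_full[OF s] by auto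
  then have mn: "m < n" using m by simp
  obtain j where j: "j \<in> arc n s m" "jammed_ring_rate n lam J i j > 0"
    using sum_pos_ex[OF _ pos] unfolding arc_def by auto
  then obtain k where k: "k < m" "j = (s + k) mod n" unfolding arc_def by auto
  have c: "j = (i + 1) mod n \<or> i = (j + 1) mod n" using rate_pos_cases[OF j(2)] by simp
  show ?thesis
  proof (rule disjE[OF c])
    assume "i = (j + 1) mod n"
    then have ii: "i = (s + Suc k) mod n" using k by (simp add: mod_Suc_eq)
    show ?thesis
    proof (cases "Suc k < m")
      case True
      then have "i \<in> arc n s m" unfolding arc_def ii by (intro image_eqI[where x="Suc k"]) auto
      then show ?thesis using iS by simp
    next
      case False
      then have "Suc k = m" using k by simp
      then show ?thesis using ii mn by simp
    qed
  next
    assume ji: "j = (i + 1) mod n"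
    then have iq: "i = (s + k + n - 1) mod n" using pred_mod[OF iS(1), of "s + k"] k by simp
    show ?thesis
    proof (cases k)
      case 0
      then show ?thesis using iq mn by simp
    next
      case (Suc k')
      have "s + k + n - 1 = (s + k') + n" using Suc by simp
      then have "i = (s + k') mod n" using iq by simp
      then have "i \<in> arc n s m" unfolding arc_def using k Suc by auto
      then show ?thesis using iS by simp
    qed
  qed
qed

lemma rate_ub:
  assumes "lam > 0" "n > 0"
  shows "jammed_ring_rate n lam J i j \<le> (if j = (i + 1) mod n then lam / 2 else 0) + (if j = (i + n - 1) mod n then lam / 2 else 0)"
proof (cases "jammed_ring_rate n lam J i j > 0")
  case True
  note c = rate_pos_cases[OF True]
  have le: "jammed_ring_rate n lam J i j \<le> lam / 2" unfolding jammed_ring_rate_def using assms by auto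
  show ?thesis
  proof (cases "j = (i + 1) mod n")
    case True
    then show ?thesis using le assms by auto
  next
    case False
    then have "i = (j + 1) mod n" using c by auto
    then have "j = (i + n - 1) mod n" using pred_mod[of j n i] c by simp
    then show ?thesis using le assms by auto
  qed
next
  case False
  then show ?thesis using assms by auto
qed

lemma out_rate:
  assumes "lam > 0" "n > 0" "S \<subseteq> {..<n}"
  shows "(\<Sum>j\<in>S. jammed_ring_rate n lam J i j) \<le> lam"
proof -
  have "(\<Sum>j\<in>S. jammed_ring_rate n lam J i j) \<le> (\<Sum>j\<in>{..<n}. jammed_ring_rate n lam J i j)"
    using assms rate_nn[OF assms(1)] by (intro sum_mono2) auto
  also have "\<dots> \<le> (\<Sum>j\<in>{..<n}. (if j = (i + 1) mod n then lam / 2 else 0) + (if j = (i + n - 1) mod n then lam / 2 else 0))"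
    using rate_ub[OF assms(1,2)] by (intro sum_mono) auto
  also have "\<dots> = lam / 2 + lam / 2" using assms(2) by (simp add: sum.distrib)
  finally show ?thesis by simp
qed



lemma alg:
  fixes ls lam r k W :: real
  assumes ls: "ls > 0" and lam: "lam > 0" and r: "r > 0" and W: "W \<ge> 0" "W \<le> 2 * lam"
  shows "ls / lam * (r / 2 - k / 4) * (k * lam / r^2 + W) \<le> ls + W * (ls / lam * (r / 2 - (k + 1) / 4))"
proof -
  have e1: "ls / lam * (r / 2 - k / 4) * (k * lam / r^2) = ls * ((r / 2 - k / 4) * k) / r^2"
    using lam r by (simp add: field_simps)
  have "(r / 2 - k / 4) * k \<le> r^2 / 4"
  proof -
    have "0 \<le> (r - k)^2" by simp
    then show ?thesis by (simp add: power2_eq_square algebra_simps)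
  qed
  then have "ls * ((r / 2 - k / 4) * k) \<le> ls * (r^2 / 4)" using ls by (intro mult_left_mono) auto
  then have t1: "ls * ((r / 2 - k / 4) * k) / r^2 \<le> ls / 4" using r by (simp add: divide_le_eq)
  have t2: "W * (ls / (4 * lam)) \<le> ls / 2"
  proof -
    have "W * (ls / (4 * lam)) \<le> (2 * lam) * (ls / (4 * lam))" using W ls lam by (intro mult_right_mono) auto
    also have "\<dots> = ls / 2" using lam by simp
    finally show ?thesis .
  qed
  have e2: "W * (ls / lam * (r / 2 - (k + 1) / 4)) = W * (ls / lam * (r / 2 - k / 4)) - W * (ls / (4 * lam))"
    using lam by (simp add: field_simps)
  have "ls / lam * (r / 2 - k / 4) * (k * lam / r^2 + W)
        = ls * ((r / 2 - k / 4) * k) / r^2 + W * (ls / lam * (r / 2 - k / 4))"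
  proof -
    have "ls / lam * (r / 2 - k / 4) * (k * lam / r^2 + W) = ls / lam * (r / 2 - k / 4) * (k * lam / r^2) + ls / lam * (r / 2 - k / 4) * W"
      by (rule distrib_left)
    then show ?thesis using e1 by (simp only: mult.commute[of _ W])
  qed
  then show ?thesis using e2 t1 t2 ls by linarith
qed

lemma arc_bound:
  assumes lam: "lam > 0" and ls: "ls > 0" and n: "n > 0"
  shows "ls / (4 * lam) * sqrt (real n) \<le> jammed_ring_avg_age n lam ls J"
proof -
  define r where "r = sqrt (real n)"
  have r: "r > 0" "r^2 = real n" unfolding r_def using n by auto
  define f where "f S = ls / lam * (r / 2 - real (card S) / 4)" for S :: "nat set"
  define P where "P S = (\<exists>s m. s < n \<and> 1 \<le> m \<and> m \<le> n \<and> S = arc n s m)" for S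
  have lb: "f {i} \<le> version_age {..<n} (\<lambda>_. lam / real n) (jammed_ring_rate n lam J) ls {i}" if i: "i < n" for i
  proof (rule vage_lb[where P = P])
    show "finite {..<n}" by simp
    show PS: "\<And>S. P S \<Longrightarrow> S \<subseteq> {..<n} \<and> S \<noteq> {}"
    proof -
      fix S assume "P S"
      then obtain s m where sm: "s < n" "1 \<le> m" "m \<le> n" "S = arc n s m" unfolding P_def by auto
      have "S \<subseteq> {..<n}" unfolding sm(4) arc_def using n by auto
      moreover have "(s + 0) mod n \<in> S" unfolding sm(4) arc_def using sm(2) by (intro imageI) auto
      ultimately show "S \<subseteq> {..<n} \<and> S \<noteq> {}" by auto
    qed
    show "\<And>j. j \<in> {..<n} \<Longrightarrow> lam / real n > 0" using lam n by simp
    show "\<And>a b. jammed_ring_rate n lam J a b \<ge> 0" using rate_nn lam by blast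
    have "arc n i 1 = {i}" unfolding arc_def using i by (simp add: lessThan_Suc)
    then have "i < n \<and> 1 \<le> (1::nat) \<and> 1 \<le> n \<and> {i} = arc n i 1" using i by simp
    then show "P {i}" unfolding P_def by blast
    show "\<And>S a. P S \<Longrightarrow> a \<in> nbrs {..<n} (jammed_ring_rate n lam J) S \<Longrightarrow> P (insert a S)"
    proof -
      fix S a assume "P S" and a: "a \<in> nbrs {..<n} (jammed_ring_rate n lam J) S"
      then obtain s m where sm: "s < n" "1 \<le> m" "m \<le> n" "S = arc n s m" unfolding P_def by auto
      have c: "m < n \<and> (a = (s + m) mod n \<or> a = (s + n - 1) mod n)" using arc_nbrs[OF sm(1,3)] a sm(4) by simp
      show "P (insert a S)"
      proof (cases "a = (s + m) mod n")
        case True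
        have "insert a S = arc n s (Suc m)" unfolding True sm(4) by (rule arc_ins1)
        moreover have "s < n \<and> 1 \<le> Suc m \<and> Suc m \<le> n" using sm c by simp
        ultimately show ?thesis unfolding P_def by blast
      next
        case False
        then have aa: "a = (s + n - 1) mod n" using c by blast
        have "insert a S = arc n ((s + n - 1) mod n) (Suc m)" unfolding aa sm(4) by (rule arc_ins2[OF sm(1)])
        moreover have "(s + n - 1) mod n < n \<and> 1 \<le> Suc m \<and> Suc m \<le> n" using sm c n by simp
        ultimately show ?thesis unfolding P_def by blast
      qed
    qed
    show "\<And>S. P S \<Longrightarrow> f S * ((\<Sum>j\<in>S. lam / real n) + (\<Sum>a\<in>nbrs {..<n} (jammed_ring_rate n lam J) S. \<Sum>j\<in>S. jammed_ring_rate n lam J a j))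
         \<le> ls + (\<Sum>a\<in>nbrs {..<n} (jammed_ring_rate n lam J) S. (\<Sum>j\<in>S. jammed_ring_rate n lam J a j) * f (insert a S))"
    proof -
      fix S assume PS0: "P S"
      then obtain s m where sm: "s < n" "1 \<le> m" "m \<le> n" "S = arc n s m" unfolding P_def by auto
      have Sn: "S \<subseteq> {..<n}" using PS[OF PS0] by simp
      have fS: "finite S" using Sn finite_subset by blast
      define N where "N = nbrs {..<n} (jammed_ring_rate n lam J) S"
      define W where "W = (\<Sum>a\<in>N. \<Sum>j\<in>S. jammed_ring_rate n lam J a j)"
      have Nsub: "N \<subseteq> {(s + m) mod n, (s + n - 1) mod n}" unfolding N_def using arc_nbrs[OF sm(1,3)] sm(4) by blast
      have c2: "card {(s + m) mod n, (s + n - 1) mod n} \<le> 2" by (simp add: card_insert_if)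
      have "card N \<le> card {(s + m) mod n, (s + n - 1) mod n}" by (rule card_mono[OF _ Nsub]) simp
      then have cN: "card N \<le> 2" using c2 by linarith
      have W0: "W \<ge> 0" unfolding W_def using rate_nn[OF lam] by (intro sum_nonneg) auto
      have "W \<le> (\<Sum>a\<in>N. lam)" unfolding W_def using out_rate[OF lam n Sn] by (intro sum_mono) auto
      also have "\<dots> = real (card N) * lam" by simp
      also have "\<dots> \<le> 2 * lam" using cN lam by (intro mult_right_mono) auto
      finally have W2: "W \<le> 2 * lam" .
      have ins: "f (insert a S) = ls / lam * (r / 2 - (real (card S) + 1) / 4)" if "a \<in> N" for a
      proof -
        have "a \<notin> S" using that unfolding N_def nbrs_def by auto
        then show ?thesis unfolding f_def using fS by simp
      qed
      have "(\<Sum>a\<in>N. (\<Sum>j\<in>S. jammed_ring_rate n lam J a j) * f (insert a S))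
           = (\<Sum>a\<in>N. (\<Sum>j\<in>S. jammed_ring_rate n lam J a j) * (ls / lam * (r / 2 - (real (card S) + 1) / 4)))"
        using ins by (intro sum.cong) auto
      also have "\<dots> = W * (ls / lam * (r / 2 - (real (card S) + 1) / 4))" unfolding W_def by (rule sum_distrib_right[symmetric])
      finally have e: "(\<Sum>a\<in>N. (\<Sum>j\<in>S. jammed_ring_rate n lam J a j) * f (insert a S)) = W * (ls / lam * (r / 2 - (real (card S) + 1) / 4))" .
      have a: "(\<Sum>j\<in>S. lam / real n) = real (card S) * lam / r^2" using r by simp
      show "f S * ((\<Sum>j\<in>S. lam / real n) + (\<Sum>a\<in>nbrs {..<n} (jammed_ring_rate n lam J) S. \<Sum>j\<in>S. jammed_ring_rate n lam J a j))
         \<le> ls + (\<Sum>a\<in>nbrs {..<n} (jammed_ring_rate n lam J) S. (\<Sum>j\<in>S. jammed_ring_rate n lam J a j) * f (insert a S))"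
        unfolding N_def[symmetric] W_def[symmetric] e a unfolding f_def
        by (rule alg[OF ls lam r(1) W0 W2])
    qed
  qed
  have f1: "ls / (4 * lam) * r \<le> f {i}" for i
  proof -
    have "1 \<le> r" unfolding r_def using n by simp
    then have "r / 4 \<le> r / 2 - 1 / 4" by simp
    then have "ls / lam * (r / 4) \<le> ls / lam * (r / 2 - 1 / 4)" using ls lam by (intro mult_left_mono) auto
    then show ?thesis unfolding f_def by simp
  qed
  have "ls / (4 * lam) * r = (1 / real n) * (\<Sum>i<n. ls / (4 * lam) * r)" using n by simp
  also have "\<dots> \<le> (1 / real n) * (\<Sum>i<n. version_age {..<n} (\<lambda>_. lam / real n) (jammed_ring_rate n lam J) ls {i})"
    using lb f1 n by (intro mult_left_mono sum_mono) (auto intro: order_trans)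
  finally show ?thesis unfolding jammed_ring_avg_age_def r_def .
qed


theorem theorem3:
  fixes ls lam \<alpha> c1 c2 :: real and ntil :: "nat \<Rightarrow> nat"
  assumes "ls > 0" and "lam > 0" and "0 \<le> \<alpha>" and "\<alpha> \<le> 1"
    and "0 < c1" and "c1 \<le> c2"
    and "\<And>n. n \<ge> 3 \<Longrightarrow> 1 \<le> ntil n \<and> ntil n \<le> n"
    and "\<And>n. n \<ge> 3 \<Longrightarrow> c1 * real n powr \<alpha> \<le> real (ntil n) \<and> real (ntil n) \<le> c2 * real n powr \<alpha>"
  shows "\<exists>C > 0. \<exists>N::nat. \<forall>n \<ge> N. \<forall>J. J \<subseteq> {..<n} \<and> card J = ntil n \<longrightarrow>
           jammed_ring_avg_age n lam ls J \<ge>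
             (if \<alpha> \<ge> 1/2 then C * real n powr \<alpha> else C * sqrt (real n))"
proof (cases "\<alpha> \<ge> 1/2")
  case True
  have Cpos: "ls * c1 / lam > 0" using assms by simp
  have "\<forall>n \<ge> 3. \<forall>J. J \<subseteq> {..<n} \<and> card J = ntil n \<longrightarrow>
           jammed_ring_avg_age n lam ls J \<ge> ls * c1 / lam * real n powr \<alpha>"
  proof (intro allI impI)
    fix n :: nat and J assume n: "n \<ge> 3" and J: "J \<subseteq> {..<n} \<and> card J = ntil n"
    have "ntil n \<ge> 1" using assms(7)[OF n] by simp
    then have Jne: "J \<noteq> {}" using J by auto
    have "ls * c1 / lam * real n powr \<alpha> = ls / lam * (c1 * real n powr \<alpha>)" by simp
    also have "\<dots> \<le> ls / lam * real (card J)"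
      using assms(8)[OF n] J assms(1,2) by (intro mult_left_mono) auto
    also have "\<dots> \<le> jammed_ring_avg_age n lam ls J"
      using seg_bound[of J n lam ls] J Jne assms(1,2) by simp
    finally show "jammed_ring_avg_age n lam ls J \<ge> ls * c1 / lam * real n powr \<alpha>" .
  qed
  then show ?thesis unfolding if_P[OF True] using Cpos by blast
next
  case False
  have Cpos: "ls / (4 * lam) > 0" using assms by simp
  have "\<forall>n \<ge> 3. \<forall>J. J \<subseteq> {..<n} \<and> card J = ntil n \<longrightarrow>
           jammed_ring_avg_age n lam ls J \<ge> ls / (4 * lam) * sqrt (real n)"
    using arc_bound assms(1,2) by simp
  then show ?thesis unfolding if_not_P[OF False] using Cpos by blast
qed

end
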